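(* For $n\ge1$ let $Z_n$ be the balanced Thick-$\mathcal{Z}$ graph with $|U_1|=|V_1|=|U_2|=|V_2|=n$. When the edges of $Z_n$ are revealed one by one in a uniformly random order to the greedy algorithm, the expected size of the resulting matching is $\left(\frac12+o(1)\right)|\textsc{OPT}|$ as $n\to\infty$, where $\textsc{OPT}$ is a maximum matching of $Z_n$.
   Context: A Thick-$\mathcal{Z}$ graph is a bipartite graph with sides $U_1\cup U_2$ and $V_1\cup V_2$ (disjoint sets), $|U_1|=|V_1|$, $|U_2|=|V_2|$, whose edge set is the union of a perfect matching between $U_1$ and $V_1$, a perfect matching between $U_2$ and $V_2$, and the complete bipartite graph between $U_2$ and $V_1$; it is balanced if additionally $|U_1|=|V_2|$. The greedy algorithm adds an arriving edge whenever the current set plus that edge is a matching. *)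

theory Defs
  imports "HOL-Probability.Probability" "HOL-Combinatorics.Multiset_Permutations"
begin

text \<open>Bipartite graphs are given by their edge set, a set of pairs (left vertex, right vertex).\<close>

definition is_matching :: "('a \<times> 'b) set \<Rightarrow> bool" where
  "is_matching M \<longleftrightarrow>
     (\<forall>(u, v) \<in> M. \<forall>(u', v') \<in> M. (u = u' \<or> v = v') \<longrightarrow> (u, v) = (u', v'))"

definition max_matching_size :: "('a \<times> 'b) set \<Rightarrow> nat" where
  "max_matching_size E = Max {card M | M. M \<subseteq> E \<and> is_matching M}"

fun greedy :: "('a \<times> 'b) set \<Rightarrow> ('a \<times> 'b) list \<Rightarrow> ('a \<times> 'b) set" where
  "greedy M [] = M"
| "greedy M (e # es) = greedy (if is_matching (insert e M) then insert e M else M) es"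

text \<open>Balanced Thick-Z graph Z_n: left side U1 = {0..<n}, U2 = {n..<2n};
  right side V1 = {0..<n}, V2 = {n..<2n}.\<close>
definition thick_Z :: "nat \<Rightarrow> (nat \<times> nat) set" where
  "thick_Z n = {(i, i) | i. i < n} \<union> {(i, i) | i. n \<le> i \<and> i < 2 * n}
               \<union> {(u, v) | u v. n \<le> u \<and> u < 2 * n \<and> v < n}"

definition expected_greedy :: "('a \<times> 'b) set \<Rightarrow> real" where
  "expected_greedy E =
     measure_pmf.expectation (pmf_of_set (permutations_of_set E)) (\<lambda>\<sigma>. real (card (greedy {} \<sigma>)))"

end

theory Submission
  imports Defs
begin


definition avg :: "'a set \<Rightarrow> ('a list \<Rightarrow> real) \<Rightarrow> real" where
  "avg A f = (\<Sum>\<sigma>\<in>permutations_of_set A. f \<sigma>) / fact (card A)"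

lemma avg_mono:
  assumes "\<And>\<sigma>. \<sigma> \<in> permutations_of_set A \<Longrightarrow> f \<sigma> \<le> g \<sigma>"
  shows "avg A f \<le> avg A g"
  unfolding avg_def by (intro divide_right_mono sum_mono assms) auto

lemma avg_add: "avg A (\<lambda>\<sigma>. f \<sigma> + g \<sigma>) = avg A f + avg A g"
  unfolding avg_def by (simp add: sum.distrib add_divide_distrib)

lemma avg_cmult: "avg A (\<lambda>\<sigma>. c * f \<sigma>) = c * avg A f"
  unfolding avg_def by (simp add: sum_distrib_left)

lemma avg_sum: "finite I \<Longrightarrow> avg A (\<lambda>\<sigma>. \<Sum>i\<in>I. f i \<sigma>) = (\<Sum>i\<in>I. avg A (f i))"
  unfolding avg_def by (simp add: sum.swap[of _ I] sum_divide_distrib)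

lemma avg_const: "finite A \<Longrightarrow> avg A (\<lambda>_. c) = c"
  unfolding avg_def by simp

lemma avg_step:
  assumes "finite A" "A \<noteq> {}"
  shows "avg A f = (\<Sum>x\<in>A. avg (A - {x}) (\<lambda>xs. f (x # xs))) / card A"
proof -
  have "(\<Sum>\<sigma>\<in>permutations_of_set A. f \<sigma>) =
        (\<Sum>x\<in>A. \<Sum>\<sigma>\<in>(\<lambda>xs. x # xs) ` permutations_of_set (A - {x}). f \<sigma>)"
    unfolding permutations_of_set_nonempty[OF assms(2)]
    by (rule sum.UNION_disjoint) (use assms in auto)
  also have "\<dots> = (\<Sum>x\<in>A. \<Sum>xs\<in>permutations_of_set (A - {x}). f (x # xs))"
    by (rule sum.cong[OF refl]) (simp add: sum.reindex inj_on_def)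
  finally have 1: "(\<Sum>\<sigma>\<in>permutations_of_set A. f \<sigma>) = \<dots>" .
  have c: "card A = Suc (card A - 1)" using assms by (simp add: card_gt_0_iff)
  have 2: "fact (card A) = real (card A) * fact (card A - 1)"
    using assms by (intro fact_reduce) (simp add: card_gt_0_iff)
  have 3: "x \<in> A \<Longrightarrow> card (A - {x}) = card A - 1" for x using assms by simp
  show ?thesis unfolding avg_def 1 2
    by (simp add: 3 sum_divide_distrib mult.commute)
qed

lemma expected_greedy_avg:
  assumes "finite E"
  shows "expected_greedy E = avg E (\<lambda>\<sigma>. real (card (greedy {} \<sigma>)))"
  unfolding expected_greedy_def avg_def
  using assms by (subst integral_pmf_of_set) auto



lemma avg_ind_le1: "finite A \<Longrightarrow> avg A (\<lambda>\<sigma>. if P \<sigma> then 1 else 0) \<le> 1"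
  using avg_mono[of A "\<lambda>\<sigma>. if P \<sigma> then 1 else 0" "\<lambda>_. 1"] avg_const[of A 1] by auto

lemma avg_avoid:
  assumes "finite A" "S \<subseteq> A"
  shows "avg A (\<lambda>\<sigma>. if set (take T \<sigma>) \<inter> S = {} then 1 else 0) \<le> (1 - card S / card A) ^ T"
  using assms
proof (induction T arbitrary: A S)
  case 0
  then show ?case by (simp add: avg_const)
next
  case (Suc T)
  show ?case
  proof (cases "A = {}")
    case True
    then show ?thesis using Suc.prems by (simp add: avg_const)
  next
    case ne: False
    define N where "N = card A"
    define s where "s = card S"
    have N0: "N > 0" using ne Suc.prems by (simp add: N_def card_gt_0_iff)
    have sN: "s \<le> N" unfolding s_def N_def using Suc.prems card_mono by blast
    have q0: "0 \<le> 1 - real s / N" using sN N0 by (simp add: field_simps)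
    have trm: "avg (A - {x}) (\<lambda>xs. if set (take (Suc T) (x # xs)) \<inter> S = {} then 1 else 0)
        \<le> (if x \<in> S then 0 else (1 - real s / N) ^ T)" if x: "x \<in> A" for x
    proof (cases "x \<in> S")
      case True
      then show ?thesis using avg_const[of "A - {x}" 0] Suc.prems by simp
    next
      case False
      have "avg (A - {x}) (\<lambda>xs. if set (take (Suc T) (x # xs)) \<inter> S = {} then 1 else 0)
          = avg (A - {x}) (\<lambda>xs. if set (take T xs) \<inter> S = {} then 1 else 0)"
        using False by simp
      also have "\<dots> \<le> (1 - card S / card (A - {x})) ^ T"
        using Suc.prems False by (intro Suc.IH) auto
      also have "\<dots> \<le> (1 - real s / N) ^ T"
      proof (rule power_mono)
        have cA: "card (A - {x}) = N - 1" using x Suc.prems by (simp add: N_def)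
        have sN1: "s \<le> N - 1" unfolding s_def cA[symmetric]
          using Suc.prems False x by (intro card_mono) auto
        show "1 - card S / card (A - {x}) \<le> 1 - real s / N"
          using N0 sN1 by (cases "N = 1") (auto simp: cA s_def[symmetric] of_nat_diff intro!: divide_left_mono)
        show "0 \<le> 1 - card S / card (A - {x})"
          using sN1 by (cases "N - 1 = 0") (auto simp: cA s_def[symmetric] divide_le_eq_1)
      qed
      finally show ?thesis using False by simp
    qed
    have "avg A (\<lambda>\<sigma>. if set (take (Suc T) \<sigma>) \<inter> S = {} then 1 else 0)
        = (\<Sum>x\<in>A. avg (A - {x}) (\<lambda>xs. if set (take (Suc T) (x # xs)) \<inter> S = {} then 1 else 0)) / N"
      using avg_step[OF Suc.prems(1) ne] N_def by simp
    also have "\<dots> \<le> (\<Sum>x\<in>A. (if x \<in> S then 0 else (1 - real s / N) ^ T)) / N"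
      by (intro divide_right_mono sum_mono trm) auto
    also have "(\<Sum>x\<in>A. (if x \<in> S then 0 else (1 - real s / N) ^ T)) = real (N - s) * (1 - real s / N) ^ T"
    proof -
      have "(\<Sum>x\<in>A. (if x \<in> S then 0 else (1 - real s / N) ^ T)) = (\<Sum>x\<in>A - S. (1 - real s / N) ^ T)"
        using Suc.prems by (intro sum.mono_neutral_cong_right) auto
      also have "\<dots> = real (N - s) * (1 - real s / N) ^ T"
        using Suc.prems card_Diff_subset[of S A] finite_subset[of S A] by (simp add: N_def s_def)
      finally show ?thesis .
    qed
    also have "real (N - s) * (1 - real s / N) ^ T / N = (1 - real s / N) ^ Suc T"
      using N0 sN by (simp add: field_simps of_nat_diff)
    finally show ?thesis by (simp add: N_def s_def)
  qed
qed

lemma avg_count: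
  assumes "finite A" "G \<subseteq> A"
  shows "avg A (\<lambda>\<sigma>. real (card (set (take T \<sigma>) \<inter> G))) \<le> real T * card G / card A"
  using assms
proof (induction T arbitrary: A G)
  case 0
  then show ?case by (simp add: avg_const)
next
  case (Suc T)
  show ?case
  proof (cases "A = {}")
    case True
    then show ?thesis using Suc.prems by (simp add: avg_const)
  next
    case ne: False
    define N where "N = card A"
    define g where "g = card G"
    have N0: "N > 0" using ne Suc.prems by (simp add: N_def card_gt_0_iff)
    have fG: "finite G" using Suc.prems finite_subset by blast
    have trm: "avg (A - {x}) (\<lambda>xs. real (card (set (take (Suc T) (x # xs)) \<inter> G)))
        \<le> (if x \<in> G then 1 else 0) + real T * (real g - (if x \<in> G then 1 else 0)) / (real N - 1)"
      if x: "x \<in> A" for x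
    proof -
      have "avg (A - {x}) (\<lambda>xs. real (card (set (take (Suc T) (x # xs)) \<inter> G)))
          \<le> avg (A - {x}) (\<lambda>xs. (if x \<in> G then 1 else 0) + real (card (set (take T xs) \<inter> (G - {x}))))"
      proof (rule avg_mono)
        fix xs
        have "set (take (Suc T) (x # xs)) \<inter> G = (if x \<in> G then {x} else {}) \<union> (set (take T xs) \<inter> (G - {x}))"
          by auto
        then have "card (set (take (Suc T) (x # xs)) \<inter> G) \<le> card (if x \<in> G then {x} else ({}::'a set)) + card (set (take T xs) \<inter> (G - {x}))"
          by (metis card_Un_le)
        then show "real (card (set (take (Suc T) (x # xs)) \<inter> G)) \<le> (if x \<in> G then 1 else 0) + real (card (set (take T xs) \<inter> (G - {x})))"
          by (cases "x \<in> G") (auto simp del: of_nat_add simp add: of_nat_add[symmetric])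
      qed
      also have "\<dots> = (if x \<in> G then 1 else 0) + avg (A - {x}) (\<lambda>xs. real (card (set (take T xs) \<inter> (G - {x}))))"
        using Suc.prems by (simp add: avg_add avg_const)
      also have "avg (A - {x}) (\<lambda>xs. real (card (set (take T xs) \<inter> (G - {x})))) \<le> real T * card (G - {x}) / card (A - {x})"
        using Suc.prems by (intro Suc.IH) auto
      also have "card (A - {x}) = N - 1" using x Suc.prems by (simp add: N_def)
      also have "real (card (G - {x})) = real g - (if x \<in> G then 1 else 0)"
      proof (cases "x \<in> G")
        case True
        then have "card G > 0" using fG card_gt_0_iff by blast
        then show ?thesis using fG True by (simp add: g_def of_nat_diff)
      qed (simp add: g_def)
      finally show ?thesis using N0 by (simp add: of_nat_diff)
    qed
    have "avg A (\<lambda>\<sigma>. real (card (set (take (Suc T) \<sigma>) \<inter> G)))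
        = (\<Sum>x\<in>A. avg (A - {x}) (\<lambda>xs. real (card (set (take (Suc T) (x # xs)) \<inter> G)))) / N"
      using avg_step[OF Suc.prems(1) ne] N_def by simp
    also have "\<dots> \<le> (\<Sum>x\<in>A. (if x \<in> G then 1 else 0) + real T * (real g - (if x \<in> G then 1 else 0)) / (real N - 1)) / N"
      by (intro divide_right_mono sum_mono trm) auto
    also have "(\<Sum>x\<in>A. (if x \<in> G then 1 else 0) + real T * (real g - (if x \<in> G then 1 else 0)) / (real N - 1))
        = g + real T * (real N * g - g) / (real N - 1)"
    proof -
      have s1: "(\<Sum>x\<in>A. (if x \<in> G then 1 else 0::real)) = g"
        using Suc.prems by (simp add: sum.If_cases g_def Int_absorb1 Int_commute)
      have "(\<Sum>x\<in>A. (if x \<in> G then 1 else 0) + real T * (real g - (if x \<in> G then 1 else 0)) / (real N - 1))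
          = (\<Sum>x\<in>A. (if x \<in> G then 1 else 0)) + real T / (real N - 1) * (\<Sum>x\<in>A. (real g - (if x \<in> G then 1 else 0)))"
        by (simp add: sum.distrib sum_distrib_left)
      also have "(\<Sum>x\<in>A. (real g - (if x \<in> G then 1 else 0::real))) = real N * g - g"
        by (simp add: sum_subtractf s1 N_def)
      finally show ?thesis using s1 by simp
    qed
    also have "(g + real T * (real N * g - g) / (real N - 1)) / N \<le> real (Suc T) * g / N"
    proof (rule divide_right_mono)
      have "real T * (real N * g - g) / (real N - 1) \<le> real T * g"
      proof (cases "N = 1")
        case True then show ?thesis by simp
      next
        case False
        then have "real N - 1 > 0" using N0 by simp
        then show ?thesis by (simp add: field_simps)
      qed
      then show "g + real T * (real N * g - g) / (real N - 1) \<le> real (Suc T) * g"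
        by (simp add: algebra_simps)
    qed simp
    finally show ?thesis by (simp add: N_def g_def)
  qed
qed



lemma is_matching_iff: "is_matching M \<longleftrightarrow> (\<forall>u v u' v'. (u, v) \<in> M \<longrightarrow> (u', v') \<in> M \<longrightarrow> (u = u' \<or> v = v') \<longrightarrow> u = u' \<and> v = v')"
  unfolding is_matching_def by (simp add: Ball_def split_paired_all)

lemma matching_subset: "is_matching N \<Longrightarrow> M \<subseteq> N \<Longrightarrow> is_matching M"
  unfolding is_matching_iff by blast

lemma matching_fst: "is_matching M \<Longrightarrow> (u, v) \<in> M \<Longrightarrow> (u, v') \<in> M \<Longrightarrow> v = v'"
  unfolding is_matching_iff by blast

lemma matching_snd: "is_matching M \<Longrightarrow> (u, v) \<in> M \<Longrightarrow> (u', v) \<in> M \<Longrightarrow> u = u'"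
  unfolding is_matching_iff by blast

lemma inj_fst_matching: "is_matching M \<Longrightarrow> inj_on fst M"
  unfolding is_matching_iff inj_on_def by auto

lemma inj_snd_matching: "is_matching M \<Longrightarrow> inj_on snd M"
  unfolding is_matching_iff inj_on_def by auto

lemma not_matching_insert:
  assumes "is_matching M" "\<not> is_matching (insert (a, b) M)"
  shows "\<exists>(u, v) \<in> M. u = a \<or> v = b"
proof (rule ccontr)
  assume "\<not> ?thesis"
  then have "\<forall>u v. (u, v) \<in> M \<longrightarrow> u \<noteq> a \<and> v \<noteq> b" by blast
  with assms(1) have "is_matching (insert (a, b) M)"
    unfolding is_matching_iff by blast
  with assms(2) show False by simp
qed

lemma greedy_matching: "is_matching M \<Longrightarrow> is_matching (greedy M es)"
  by (induction es arbitrary: M) simp_all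

lemma greedy_mono: "M \<subseteq> greedy M es"
proof (induction es arbitrary: M)
  case (Cons x es)
  have "M \<subseteq> (if is_matching (insert x M) then insert x M else M)" by auto
  then show ?case using Cons.IH[of "if is_matching (insert x M) then insert x M else M"] by simp
qed simp

lemma greedy_subset: "greedy M es \<subseteq> M \<union> set es"
proof (induction es arbitrary: M)
  case (Cons x es)
  have "(if is_matching (insert x M) then insert x M else M) \<subseteq> insert x M" by auto
  then show ?case using Cons.IH[of "if is_matching (insert x M) then insert x M else M"] by auto
qed simp

lemma greedy_append: "greedy M (xs @ ys) = greedy (greedy M xs) ys"
  by (induction xs arbitrary: M) auto

lemma greedy_maximal:
  assumes "e \<in> set es"
  shows "e \<in> greedy M es \<or> \<not> is_matching (insert e (greedy M es))"
  using assms
proof (induction es arbitrary: M)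
  case Nil then show ?case by simp
next
  case (Cons x es)
  show ?case
  proof (cases "e = x")
    case True
    show ?thesis
    proof (cases "is_matching (insert e M)")
      case True
      have "e \<in> greedy (insert e M) es" using greedy_mono[of "insert e M" es] by blast
      then show ?thesis using True \<open>e = x\<close> by simp
    next
      case False
      have "insert e M \<subseteq> insert e (greedy M es)" using greedy_mono by blast
      then have "\<not> is_matching (insert e (greedy M es))"
        using False matching_subset by blast
      then show ?thesis using False \<open>e = x\<close> by simp
    qed
  next
    case False
    then show ?thesis using Cons by simp
  qed
qed



definition Dg :: "nat \<Rightarrow> (nat \<times> nat) set" where "Dg n = (\<lambda>i. (i, i)) ` {0..<2*n}"
definition Cr :: "nat \<Rightarrow> (nat \<times> nat) set" where "Cr n = {n..<2*n} \<times> {0..<n}"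

lemma thick_Z_eq: "thick_Z n = Dg n \<union> Cr n"
  unfolding thick_Z_def Dg_def Cr_def by auto

lemma finite_thick_Z [simp]: "finite (thick_Z n)"
  by (simp add: thick_Z_eq Dg_def Cr_def)

lemma card_Dg: "card (Dg n) = 2 * n"
  unfolding Dg_def by (subst card_image) (auto simp: inj_on_def)

lemma card_Cr: "card (Cr n) = n * n"
  unfolding Cr_def by (simp add: card_cartesian_product)

lemma card_thick_Z: "card (thick_Z n) = n * n + 2 * n"
proof -
  have "Dg n \<inter> Cr n = {}" unfolding Dg_def Cr_def by auto
  then have "card (Dg n \<union> Cr n) = card (Dg n) + card (Cr n)"
    by (intro card_Un_disjoint) (auto simp: Dg_def Cr_def)
  then show ?thesis by (simp add: thick_Z_eq card_Dg card_Cr)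
qed

lemma thick_Z_fst: "(u, v) \<in> thick_Z n \<Longrightarrow> u < 2 * n"
  unfolding thick_Z_def by auto

lemma thick_Z_fst_small: "(u, v) \<in> thick_Z n \<Longrightarrow> u < n \<Longrightarrow> v = u"
  unfolding thick_Z_def by auto

lemma thick_Z_snd_small: "(u, v) \<in> thick_Z n \<Longrightarrow> v < n \<Longrightarrow> u = v \<or> (n \<le> u \<and> u < 2 * n)"
  unfolding thick_Z_def by auto

lemma matching_card_le: 
  assumes "M \<subseteq> thick_Z n" "is_matching M"
  shows "card M \<le> 2 * n"
proof -
  have "card M = card (fst ` M)" using inj_fst_matching[OF assms(2)] by (simp add: card_image)
  also have "\<dots> \<le> card {0..<2*n}"
    by (intro card_mono) (use assms thick_Z_fst in force)+
  finally show ?thesis by simp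
qed

lemma Dg_matching: "is_matching (Dg n)"
  unfolding is_matching_iff Dg_def by auto

lemma max_matching_thick_Z: "max_matching_size (thick_Z n) = 2 * n"
  unfolding max_matching_size_def
proof (rule Max_eqI)
  show "finite {card M |M. M \<subseteq> thick_Z n \<and> is_matching M}"
    by (rule finite_subset[of _ "{0..2*n}"]) (auto dest: matching_card_le)
  show "y \<le> 2 * n" if "y \<in> {card M |M. M \<subseteq> thick_Z n \<and> is_matching M}" for y
    using that matching_card_le by auto
  show "2 * n \<in> {card M |M. M \<subseteq> thick_Z n \<and> is_matching M}"
  proof -
    have "2*n = card (Dg n) \<and> Dg n \<subseteq> thick_Z n \<and> is_matching (Dg n)"
      by (simp add: card_Dg thick_Z_eq Dg_matching)
    then show ?thesis by blast
  qed
qed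

lemma greedy_lower:
  assumes "\<sigma> \<in> permutations_of_set (thick_Z n)"
  shows "n \<le> card (greedy {} \<sigma>)"
proof -
  define M where "M = greedy {} \<sigma>"
  have set\<sigma>: "set \<sigma> = thick_Z n" using assms by (simp add: permutations_of_setD)
  have mat: "is_matching M" unfolding M_def by (rule greedy_matching) (simp add: is_matching_def)
  have sub: "M \<subseteq> thick_Z n" unfolding M_def using greedy_subset[of "{}" \<sigma>] set\<sigma> by simp
  have fin: "finite M" by (rule finite_subset[OF sub]) simp
  have "{0..<n} \<subseteq> snd ` M"
  proof
    fix i assume i: "i \<in> {0..<n}"
    have e: "(i, i) \<in> set \<sigma>" using i set\<sigma> by (auto simp: thick_Z_def)
    from greedy_maximal[OF e, of "{}"] have "(i, i) \<in> M \<or> \<not> is_matching (insert (i, i) M)"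
      by (simp add: M_def)
    then show "i \<in> snd ` M"
    proof
      assume "(i, i) \<in> M" then show ?thesis by force
    next
      assume "\<not> is_matching (insert (i, i) M)"
      then obtain u v where uv: "(u, v) \<in> M" "u = i \<or> v = i" using not_matching_insert[OF mat] by blast
      then have "v = i" using sub thick_Z_fst_small[of u v n] i by auto
      then show ?thesis using uv by force
    qed
  qed
  then have "card {0..<n} \<le> card (snd ` M)" by (intro card_mono) (use fin in auto)
  also have "\<dots> \<le> card M" using fin by (rule card_image_le)
  finally show ?thesis by (simp add: M_def)
qed



definition bad :: "nat \<Rightarrow> nat \<Rightarrow> nat \<Rightarrow> (nat \<times> nat) list \<Rightarrow> bool" where
  "bad n T k \<sigma> \<longleftrightarrow> (\<exists>A B. A \<subseteq> {0..<n} \<and> card A = k \<and> B \<subseteq> {n..<2*n} \<and> card B = k \<and>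
      set (take T \<sigma>) \<inter> (B \<times> A) = {})"

lemma greedy_upper:
  assumes "\<sigma> \<in> permutations_of_set (thick_Z n)"
  shows "card (greedy {} \<sigma>) \<le> n + 2 * card (set (take T \<sigma>) \<inter> Dg n) + k + (if bad n T k \<sigma> then n else 0)"
proof -
  define M where "M = greedy {} \<sigma>"
  define MT where "MT = greedy {} (take T \<sigma>)"
  define P where "P = set (take T \<sigma>)"
  define D where "D = card (P \<inter> Dg n)"
  have set\<sigma>: "set \<sigma> = thick_Z n" using assms by (simp add: permutations_of_setD)
  have m0: "is_matching ({} :: (nat \<times> nat) set)" by (simp add: is_matching_def)
  have matM: "is_matching M" unfolding M_def by (rule greedy_matching[OF m0])
  have matMT: "is_matching MT" unfolding MT_def by (rule greedy_matching[OF m0])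
  have subM: "M \<subseteq> thick_Z n" unfolding M_def using greedy_subset[of "{}" \<sigma>] set\<sigma> by simp
  have MTP: "MT \<subseteq> P" unfolding MT_def P_def using greedy_subset[of "{}" "take T \<sigma>"] by simp
  have PE: "P \<subseteq> thick_Z n" unfolding P_def using set_take_subset[of T \<sigma>] set\<sigma> by simp
  have MTM: "MT \<subseteq> M"
  proof -
    have "M = greedy MT (drop T \<sigma>)" unfolding M_def MT_def
      by (metis append_take_drop_id greedy_append)
    then show ?thesis using greedy_mono by blast
  qed
  have finM: "finite M" by (rule finite_subset[OF subM]) simp
  have finP: "finite P" unfolding P_def by simp
  have finMT: "finite MT" using finP MTP finite_subset by auto
  define X where "X = {i \<in> {0..<n}. (i, i) \<in> M}"
  have a: "card M \<le> n + card X"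
  proof -
    define M1 where "M1 = {e \<in> M. fst e < n}"
    define M2 where "M2 = {e \<in> M. \<not> fst e < n}"
    have "M = M1 \<union> M2" unfolding M1_def M2_def by auto
    then have "card M \<le> card M1 + card M2" by (metis card_Un_le)
    moreover have "M1 = (\<lambda>i. (i, i)) ` X"
    proof
      show "M1 \<subseteq> (\<lambda>i. (i, i)) ` X"
      proof
        fix e assume e: "e \<in> M1"
        obtain u v where uv: "e = (u, v)" by fastforce
        have "v = u" using e subM thick_Z_fst_small[of u v n] uv by (auto simp: M1_def)
        then show "e \<in> (\<lambda>i. (i, i)) ` X" using e uv by (auto simp: M1_def X_def)
      qed
      show "(\<lambda>i. (i, i)) ` X \<subseteq> M1" unfolding M1_def X_def by auto
    qed
    then have "card M1 = card X" by (simp add: card_image inj_on_def)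
    moreover have "card M2 \<le> n"
    proof -
      have "card M2 = card (fst ` M2)"
        using inj_fst_matching[OF matching_subset[OF matM]] by (simp add: card_image M2_def)
      also have "\<dots> \<le> card {n..<2*n}"
        by (intro card_mono) (use subM thick_Z_fst in \<open>force simp: M2_def\<close>)+
      finally show ?thesis by simp
    qed
    ultimately show ?thesis by linarith
  qed
  define A' where "A' = {v \<in> {0..<n}. \<forall>u. (u, v) \<notin> MT}"
  define B' where "B' = {u \<in> {n..<2*n}. \<forall>v. (u, v) \<notin> MT}"
  have b: "card X \<le> D + card A'"
  proof -
    have "X \<subseteq> fst ` (P \<inter> Dg n) \<union> A'"
    proof
      fix i assume i: "i \<in> X"
      show "i \<in> fst ` (P \<inter> Dg n) \<union> A'"
      proof (cases "\<exists>u. (u, i) \<in> MT")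
        case True
        then obtain u where u: "(u, i) \<in> MT" by blast
        then have "u = i" using matching_snd[OF matM, of u i i] MTM i by (auto simp: X_def)
        then have "(i, i) \<in> P \<inter> Dg n" using u MTP i by (auto simp: Dg_def X_def)
        then show ?thesis by force
      next
        case False
        then show ?thesis using i by (auto simp: A'_def X_def)
      qed
    qed
    then have "card X \<le> card (fst ` (P \<inter> Dg n) \<union> A')"
      by (intro card_mono) (auto simp: finP A'_def)
    also have "\<dots> \<le> card (fst ` (P \<inter> Dg n)) + card A'" by (rule card_Un_le)
    also have "card (fst ` (P \<inter> Dg n)) \<le> D" unfolding D_def by (rule card_image_le) (simp add: finP)
    finally show ?thesis by simp
  qed
  have c: "card A' \<le> card B' + D"
  proof -
    define C where "C = MT \<inter> Cr n"
    define cov1 where "cov1 = {v \<in> {0..<n}. \<exists>u. (u, v) \<in> MT}"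
    define cov2 where "cov2 = {u \<in> {n..<2*n}. \<exists>v. (u, v) \<in> MT}"
    have finC: "finite C" using finMT by (simp add: C_def)
    have A'eq: "A' = {0..<n} - cov1" unfolding A'_def cov1_def by auto
    have B'eq: "B' = {n..<2*n} - cov2" unfolding B'_def cov2_def by auto
    have cA: "card A' = n - card cov1" unfolding A'eq by (subst card_Diff_subset) (auto simp: cov1_def)
    have cB: "card B' = n - card cov2" unfolding B'eq by (subst card_Diff_subset) (auto simp: cov2_def)
    have "card C = card (snd ` C)"
      using inj_snd_matching[OF matching_subset[OF matMT]] by (simp add: card_image C_def)
    also have "\<dots> \<le> card cov1"
      by (intro card_mono) (auto simp: cov1_def C_def Cr_def)
    finally have c1: "card C \<le> card cov1" .
    have "cov2 \<subseteq> fst ` C \<union> fst ` (MT \<inter> Dg n)"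
    proof
      fix u assume u: "u \<in> cov2"
      then obtain v where v: "(u, v) \<in> MT" and un: "n \<le> u" "u < 2 * n" by (auto simp: cov2_def)
      have "(u, v) \<in> thick_Z n" using v MTM subM by auto
      then have "(u, v) \<in> Dg n \<or> (u, v) \<in> Cr n" by (simp add: thick_Z_eq)
      then show "u \<in> fst ` C \<union> fst ` (MT \<inter> Dg n)" using v by (force simp: C_def)
    qed
    then have "card cov2 \<le> card (fst ` C \<union> fst ` (MT \<inter> Dg n))"
      by (intro card_mono) (auto simp: finC finMT)
    also have "\<dots> \<le> card (fst ` C) + card (fst ` (MT \<inter> Dg n))" by (rule card_Un_le)
    also have "\<dots> \<le> card C + card (MT \<inter> Dg n)"
      by (intro add_mono card_image_le) (auto simp: finC finMT)
    also have "card (MT \<inter> Dg n) \<le> D" unfolding D_def using MTP by (intro card_mono) (auto simp: finP)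
    finally have c2: "card cov2 \<le> card C + D" by simp
    have c3: "card cov2 \<le> n"
    proof -
      have "cov2 \<subseteq> {n..<2*n}" by (auto simp: cov2_def)
      from card_mono[OF _ this] show ?thesis by simp
    qed
    show ?thesis using cA cB c1 c2 c3 by linarith
  qed
  have d: "(u, v) \<notin> P" if u: "u \<in> B'" and v: "v \<in> A'" for u v
  proof
    assume uvP: "(u, v) \<in> P"
    from greedy_maximal[of "(u, v)" "take T \<sigma>" "{}"] uvP
    have "(u, v) \<in> MT \<or> \<not> is_matching (insert (u, v) MT)" by (simp add: MT_def P_def)
    then show False
    proof
      assume "(u, v) \<in> MT" then show False using v by (auto simp: A'_def)
    next
      assume "\<not> is_matching (insert (u, v) MT)"
      then obtain a b where "(a, b) \<in> MT" "a = u \<or> b = v" using not_matching_insert[OF matMT] by blast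
      then show False using u v by (auto simp: A'_def B'_def)
    qed
  qed
  have cX: "card X \<le> n"
  proof -
    have "X \<subseteq> {0..<n}" by (auto simp: X_def)
    from card_mono[OF _ this] show ?thesis by simp
  qed
  show ?thesis
  proof (cases "card A' \<le> k + D")
    case True
    then show ?thesis using a b unfolding M_def[symmetric] P_def[symmetric] D_def[symmetric] by linarith
  next
    case False
    obtain A where A: "A \<subseteq> A'" "card A = k" using obtain_subset_with_card_n[of k A'] False by auto
    obtain B where B: "B \<subseteq> B'" "card B = k" using obtain_subset_with_card_n[of k B'] False c by auto
    have "set (take T \<sigma>) \<inter> (B \<times> A) = {}"
    proof -
      have "(u, v) \<notin> P" if "u \<in> B" "v \<in> A" for u v using d A B that by blast
      then show ?thesis by (auto simp: P_def)
    qed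
    moreover have "A \<subseteq> {0..<n}" "B \<subseteq> {n..<2*n}" using A B by (auto simp: A'_def B'_def)
    ultimately have "bad n T k \<sigma>" unfolding bad_def using A B by blast
    then show ?thesis using a cX unfolding M_def[symmetric] P_def[symmetric] D_def[symmetric] by simp
  qed
qed



lemma expected_bound:
  fixes n T k :: nat
  defines "N \<equiv> real (n * n + 2 * n)"
  shows "expected_greedy (thick_Z n) \<le>
     n + 2 * (real T * (2 * n) / N) + k + n * ((n choose k) ^ 2 * (1 - real (k * k) / N) ^ T)"
proof -
  define E where "E = thick_Z n"
  define SA where "SA = {A. A \<subseteq> {0..<n} \<and> card A = k}"
  define SB where "SB = {B. B \<subseteq> {n..<2*n} \<and> card B = k}"
  define ind where "ind = (\<lambda>A B (\<sigma> :: (nat \<times> nat) list). if set (take T \<sigma>) \<inter> (B \<times> A) = {} then 1 else (0::real))"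
  have finSA: "finite SA" unfolding SA_def by (rule finite_subset[of _ "Pow {0..<n}"]) auto
  have finSB: "finite SB" unfolding SB_def by (rule finite_subset[of _ "Pow {n..<2*n}"]) auto
  have cSA: "card SA = n choose k" unfolding SA_def using n_subsets[of "{0..<n}" k] by simp
  have cSB: "card SB = n choose k" unfolding SB_def using n_subsets[of "{n..<2*n}" k] by simp
  have cE: "real (card E) = N" unfolding E_def N_def by (simp add: card_thick_Z)
  have pw: "real (card (greedy {} \<sigma>)) \<le> n + 2 * real (card (set (take T \<sigma>) \<inter> Dg n)) + k
              + n * (\<Sum>A\<in>SA. \<Sum>B\<in>SB. ind A B \<sigma>)"
    if \<sigma>: "\<sigma> \<in> permutations_of_set E" for \<sigma>
  proof -
    have nn: "0 \<le> (\<Sum>A\<in>SA. \<Sum>B\<in>SB. ind A B \<sigma>)" by (intro sum_nonneg) (auto simp: ind_def)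
    have "(if bad n T k \<sigma> then real n else 0) \<le> n * (\<Sum>A\<in>SA. \<Sum>B\<in>SB. ind A B \<sigma>)"
    proof (cases "bad n T k \<sigma>")
      case True
      then obtain A B where AB: "A \<in> SA" "B \<in> SB" "set (take T \<sigma>) \<inter> (B \<times> A) = {}"
        unfolding bad_def SA_def SB_def by blast
      have "1 = ind A B \<sigma>" using AB by (simp add: ind_def)
      also have "\<dots> \<le> (\<Sum>B\<in>SB. ind A B \<sigma>)"
        by (rule member_le_sum) (use AB finSB in \<open>auto simp: ind_def\<close>)
      also have "\<dots> \<le> (\<Sum>A\<in>SA. \<Sum>B\<in>SB. ind A B \<sigma>)"
        by (rule member_le_sum[of A SA "\<lambda>A. \<Sum>B\<in>SB. ind A B \<sigma>"]) (use AB finSA in \<open>auto simp: ind_def intro: sum_nonneg\<close>)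
      finally have "real n * 1 \<le> real n * (\<Sum>A\<in>SA. \<Sum>B\<in>SB. ind A B \<sigma>)"
        by (intro mult_left_mono) auto
      then show ?thesis using True by simp
    qed (use nn in simp)
    moreover have "card (greedy {} \<sigma>) \<le> n + 2 * card (set (take T \<sigma>) \<inter> Dg n) + k + (if bad n T k \<sigma> then n else 0)"
      using greedy_upper \<sigma> E_def by blast
    then have "real (card (greedy {} \<sigma>)) \<le> n + 2 * real (card (set (take T \<sigma>) \<inter> Dg n)) + k + (if bad n T k \<sigma> then real n else 0)"
      by (cases "bad n T k \<sigma>") (simp_all only: if_True if_False of_nat_le_iff[symmetric] of_nat_add of_nat_mult of_nat_numeral of_nat_0)
    ultimately show ?thesis by linarith
  qed
  have "expected_greedy (thick_Z n) = avg E (\<lambda>\<sigma>. real (card (greedy {} \<sigma>)))"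
    by (simp add: expected_greedy_avg E_def)
  also have "\<dots> \<le> avg E (\<lambda>\<sigma>. n + 2 * real (card (set (take T \<sigma>) \<inter> Dg n)) + k
              + n * (\<Sum>A\<in>SA. \<Sum>B\<in>SB. ind A B \<sigma>))"
    by (rule avg_mono) (rule pw)
  also have "\<dots> = n + 2 * avg E (\<lambda>\<sigma>. real (card (set (take T \<sigma>) \<inter> Dg n))) + k
              + n * (\<Sum>A\<in>SA. \<Sum>B\<in>SB. avg E (ind A B))"
    by (simp add: avg_add avg_cmult avg_const avg_sum finSA finSB E_def)
  also have "avg E (\<lambda>\<sigma>. real (card (set (take T \<sigma>) \<inter> Dg n))) \<le> real T * (2 * n) / N"
  proof -
    have "Dg n \<subseteq> E" by (simp add: E_def thick_Z_eq)
    from avg_count[OF _ this, of T] show ?thesis using cE by (simp add: E_def card_Dg)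
  qed
  also have "(\<Sum>A\<in>SA. \<Sum>B\<in>SB. avg E (ind A B)) \<le> (\<Sum>A\<in>SA. \<Sum>B\<in>SB. (1 - real (k * k) / N) ^ T)"
  proof (intro sum_mono)
    fix A B assume A: "A \<in> SA" and B: "B \<in> SB"
    have sub: "B \<times> A \<subseteq> E" using A B by (auto simp: SA_def SB_def E_def thick_Z_def)
    have cBA: "card (B \<times> A) = k * k" using A B by (simp add: SA_def SB_def card_cartesian_product)
    show "avg E (ind A B) \<le> (1 - real (k * k) / N) ^ T"
      using avg_avoid[of E "B \<times> A" T] sub cBA cE by (simp add: E_def ind_def)
  qed
  also have "(\<Sum>A\<in>SA. \<Sum>B\<in>SB. (1 - real (k * k) / N) ^ T) = (n choose k) ^ 2 * (1 - real (k * k) / N) ^ T"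
    by (simp add: cSA cSB power2_eq_square)
  finally show ?thesis by (simp add: mult_left_mono)
qed



lemma key_exp:
  fixes n j :: nat
  assumes j: "j \<ge> 1" and n1: "n \<ge> 2 * j" and n2: "n \<ge> 24 * j^3 * (2 + j)"
  shows "4 ^ n * (1 - real ((n div j) * (n div j)) / real (n * n + 2 * n)) ^ (n * n div j) \<le> 1 / real j"
proof -
  define k where "k = n div j"
  define T where "T = n * n div j"
  define N where "N = real (n * n + 2 * n)"
  define c where "c = 1 / (12 * real j ^ 2)"
  have jr: "real j \<ge> 1" using j by simp
  have npos: "n \<ge> 1" using n1 j by simp
  have nr: "real n \<ge> 2 * real j" using n1 by simp
  have s1: "real k \<ge> real n / (2 * real j)"
  proof -
    have "n = j * k + n mod j" unfolding k_def by simp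
    moreover have "n mod j < j" using j by simp
    ultimately have "real n \<le> real j * real k + real j"
      by (metis less_or_eq_imp_le add_le_mono1 add_le_cancel_left of_nat_add of_nat_le_iff of_nat_mult)
    then have "real j * real k \<ge> real n / 2" using nr by linarith
    then show ?thesis using jr by (simp add: field_simps)
  qed
  have s2: "real T \<ge> real n ^ 2 / (2 * real j)"
  proof -
    have "n * n = j * T + (n * n) mod j" unfolding T_def by simp
    moreover have "(n * n) mod j < j" using j by simp
    ultimately have "real (n * n) \<le> real j * real T + real j"
      by (metis less_or_eq_imp_le add_le_mono1 add_le_cancel_left of_nat_add of_nat_le_iff of_nat_mult)
    moreover have "real n ^ 2 \<ge> 2 * real j"
    proof -
      have "real n \<le> real n ^ 2" using npos by (simp add: power2_eq_square)
      then show ?thesis using nr by linarith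
    qed
    ultimately have "real j * real T \<ge> real n ^ 2 / 2" by (simp add: power2_eq_square)
    then show ?thesis using jr by (simp add: field_simps)
  qed
  have Npos: "N > 0" using npos by (simp add: N_def add_pos_nonneg)
  have N3: "N \<le> 3 * real n ^ 2"
  proof -
    have "real n \<le> real n ^ 2" using npos by (simp add: power2_eq_square)
    then show ?thesis by (simp add: N_def power2_eq_square)
  qed
  have kn: "k \<le> n" unfolding k_def by simp
  have s3: "real (k * k) / N \<ge> c"
  proof -
    have "real (k * k) \<ge> (real n / (2 * real j))^2"
    proof -
      have "(real n / (2 * real j))^2 \<le> real k ^ 2" using s1 by (intro power_mono) auto
      then show ?thesis by (simp add: power2_eq_square)
    qed
    also have "(real n / (2 * real j))^2 = real n ^ 2 / (4 * real j ^ 2)" by (simp add: power_divide power_mult_distrib)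
    finally have a: "real (k * k) \<ge> real n ^ 2 / (4 * real j ^ 2)" .
    have "c = (real n ^ 2 / (4 * real j ^ 2)) / (3 * real n ^ 2)"
      using npos by (simp add: c_def field_simps)
    also have "\<dots> \<le> real (k * k) / N"
      using a N3 Npos by (intro frac_le) auto
    finally show ?thesis .
  qed
  have q0: "0 \<le> 1 - real (k * k) / N"
  proof -
    have "k * k \<le> n * n + 2 * n" using mult_le_mono[OF kn kn] by linarith
    then have "real (k * k) \<le> N" unfolding N_def by (simp only: of_nat_le_iff)
    then show ?thesis using Npos by (simp add: field_simps)
  qed
  have "(1 - real (k * k) / N) ^ T \<le> (1 - c) ^ T"
    using q0 s3 by (intro power_mono) auto
  also have "\<dots> \<le> exp (- c) ^ T"
    using s3 q0 by (intro power_mono) (use exp_ge_add_one_self[of "-c"] in auto)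
  also have "\<dots> = exp (- c * T)" by (simp add: exp_of_nat_mult[symmetric] mult.commute)
  also have "\<dots> \<le> exp (- c * (real n ^ 2 / (2 * real j)))"
  proof -
    have "c * (real n ^ 2 / (2 * real j)) \<le> c * real T" using s2 by (intro mult_left_mono) (auto simp: c_def)
    then show ?thesis by simp
  qed
  also have "- c * (real n ^ 2 / (2 * real j)) = - (real n ^ 2) / (24 * real j ^ 3)"
    by (simp add: c_def field_simps power2_eq_square power3_eq_cube)
  finally have A: "(1 - real (k * k) / N) ^ T \<le> exp (- (real n ^ 2) / (24 * real j ^ 3))" .
  have B: "(4::real) ^ n \<le> exp (2 * real n)"
  proof -
    have "exp (1::real) \<ge> 2" using exp_ge_add_one_self[of 1] by simp
    then have "(2::real) * 2 \<le> exp 1 * exp 1" by (intro mult_mono) auto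
    moreover have "exp (1::real) * exp 1 = exp 2" using exp_add[of "1::real" 1] by simp
    ultimately have "(4::real) \<le> exp 2" by simp
    then have "(4::real) ^ n \<le> exp 2 ^ n" by (intro power_mono) auto
    also have "\<dots> = exp (2 * real n)" by (simp add: exp_of_nat_mult[symmetric] mult.commute)
    finally show ?thesis .
  qed
  have C: "2 * real n - (real n ^ 2) / (24 * real j ^ 3) \<le> - real j"
  proof -
    have "real (24 * j ^ 3 * (2 + j)) \<le> real n" using n2 by (simp only: of_nat_le_iff)
    then have "real n \<ge> 24 * real j ^ 3 * (2 + real j)" by (simp add: algebra_simps)
    then have "real n * real n \<ge> real n * (24 * real j ^ 3 * (2 + real j))"
      by (intro mult_left_mono) auto
    then have "real n ^ 2 / (24 * real j ^ 3) \<ge> real n * (2 + real j)"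
      using jr by (simp add: field_simps power2_eq_square)
    moreover have "real n * real j \<ge> real j" using npos jr by simp
    ultimately show ?thesis by (simp add: algebra_simps)
  qed
  have "4 ^ n * (1 - real (k * k) / N) ^ T \<le> exp (2 * real n) * exp (- (real n ^ 2) / (24 * real j ^ 3))"
    using A B q0 by (intro mult_mono) auto
  also have "\<dots> = exp (2 * real n - (real n ^ 2) / (24 * real j ^ 3))" by (simp add: exp_diff exp_minus field_simps)
  also have "\<dots> \<le> exp (- real j)" using C by simp
  also have "\<dots> \<le> 1 / real j"
  proof -
    have "real j \<le> exp (real j)" using exp_ge_add_one_self[of "real j"] by linarith
    then show ?thesis using jr by (simp add: exp_minus field_simps)
  qed
  finally show ?thesis by (simp add: k_def T_def N_def)
qed



lemma eg_lower: "real n \<le> expected_greedy (thick_Z n)"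
proof -
  have "real n = avg (thick_Z n) (\<lambda>_. real n)" by (simp add: avg_const)
  also have "\<dots> \<le> avg (thick_Z n) (\<lambda>\<sigma>. real (card (greedy {} \<sigma>)))"
    by (rule avg_mono) (use greedy_lower in simp)
  also have "\<dots> = expected_greedy (thick_Z n)" by (simp add: expected_greedy_avg)
  finally show ?thesis .
qed

lemma eg_upper:
  fixes n j :: nat
  assumes j: "j \<ge> 1" and n1: "n \<ge> 2 * j" and n2: "n \<ge> 24 * j^3 * (2 + j)"
  shows "expected_greedy (thick_Z n) \<le> real n + 6 * real n / real j"
proof -
  define k where "k = n div j"
  define T where "T = n * n div j"
  define N where "N = real (n * n + 2 * n)"
  define q where "q = 1 - real (k * k) / N"
  have npos: "n \<ge> 1" using n1 j by simp
  have jr: "real j \<ge> 1" using j by simp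
  have Nge: "N \<ge> real n * real n" by (simp add: N_def)
  have Npos: "N > 0" using npos by (simp add: N_def add_pos_nonneg)
  have kn: "k \<le> n" unfolding k_def by simp
  have q0: "0 \<le> q"
  proof -
    have "k * k \<le> n * n + 2 * n" using mult_le_mono[OF kn kn] by linarith
    then have "real (k * k) \<le> N" unfolding N_def by (simp only: of_nat_le_iff)
    then show ?thesis using Npos by (simp add: q_def field_simps)
  qed
  have E: "expected_greedy (thick_Z n) \<le> n + 2 * (real T * (2 * n) / N) + k + n * ((n choose k) ^ 2 * q ^ T)"
    using expected_bound[of n T k] by (simp add: N_def q_def)
  have t1: "real T \<le> real n * real n / real j" unfolding T_def
    using of_nat_div_le_of_nat[of "n * n" j] by simp
  have t2: "real T * (2 * n) / N \<le> 2 * real n / real j"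
  proof -
    have "real T * (2 * n) / N \<le> (real n * real n / real j) * (2 * n) / (real n * real n)"
      using t1 Nge Npos npos by (intro frac_le mult_right_mono) auto
    also have "\<dots> = 2 * real n / real j" using npos by (simp add: field_simps)
    finally show ?thesis .
  qed
  have t3: "real k \<le> real n / real j" unfolding k_def using of_nat_div_le_of_nat[of n j] by simp
  have t4: "(n choose k) ^ 2 * q ^ T \<le> 1 / real j"
  proof -
    have "real (n choose k) ^ 2 \<le> (2 ^ n) ^ 2"
      using binomial_le_pow2[of n k] by (intro power_mono) (simp_all add: of_nat_le_iff[symmetric])
    also have "(2 ^ n) ^ 2 = (4::real) ^ n"
    proof -
      have "((2::real) ^ n) ^ 2 = (2 ^ 2) ^ n" by (simp only: power_mult[symmetric] mult.commute)
      then show ?thesis by simp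
    qed
    finally have "real (n choose k) ^ 2 * q ^ T \<le> 4 ^ n * q ^ T"
      using q0 by (intro mult_right_mono) auto
    also have "\<dots> \<le> 1 / real j" using key_exp[OF j n1 n2] by (simp add: q_def k_def T_def N_def)
    finally show ?thesis by simp
  qed
  have "n * ((n choose k) ^ 2 * q ^ T) \<le> real n * (1 / real j)"
    using t4 by (intro mult_left_mono) auto
  then have c: "n * ((n choose k) ^ 2 * q ^ T) \<le> real n / real j" by simp
  have a: "2 * (real T * (2 * n) / N) \<le> 4 * real n / real j" using t2 by simp
  have b: "real n + 4 * real n / real j + real n / real j + real n / real j = real n + 6 * real n / real j"
    by (simp add: field_simps)
  show ?thesis using E t3 a b c by linarith
qed

theorem lemma10:
  shows "(\<lambda>n. expected_greedy (thick_Z n) / real (max_matching_size (thick_Z n)))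
           \<longlonglongrightarrow> 1 / 2"
  unfolding lim_sequentially
proof (intro allI impI)
  fix r :: real assume r: "r > 0"
  obtain j :: nat where j: "j \<ge> 1" "3 / real j < r"
  proof -
    obtain j0 :: nat where "real j0 > 3 / r" using reals_Archimedean2 by blast
    then have "3 < r * real j0" using r by (simp add: field_simps)
    then have "3 < r * real (Suc j0)" using r by (simp add: algebra_simps)
    then have "3 / real (Suc j0) < r" by (simp add: field_simps)
    then show ?thesis using that[of "Suc j0"] by simp
  qed
  define n0 where "n0 = 1 + 2 * j + 24 * j^3 * (2 + j)"
  show "\<exists>no. \<forall>n\<ge>no. dist (expected_greedy (thick_Z n) / real (max_matching_size (thick_Z n))) (1 / 2) < r"
  proof (intro exI allI impI)
    fix n assume n: "n \<ge> n0"
    have n1: "n \<ge> 2 * j" "n \<ge> 24 * j^3 * (2 + j)" "n \<ge> 1" using n by (auto simp: n0_def)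
    have mm: "real (max_matching_size (thick_Z n)) = 2 * real n" by (simp add: max_matching_thick_Z)
    have np: "real n > 0" using n1 by simp
    have lo: "expected_greedy (thick_Z n) / (2 * real n) \<ge> 1 / 2"
      using eg_lower[of n] np by (simp add: field_simps)
    have "expected_greedy (thick_Z n) / (2 * real n) \<le> (real n + 6 * real n / real j) / (2 * real n)"
      using eg_upper[OF j(1) n1(1,2)] np by (intro divide_right_mono) auto
    also have "\<dots> = 1 / 2 + 3 / real j" using np by (simp add: field_simps)
    finally have hi: "expected_greedy (thick_Z n) / (2 * real n) < 1 / 2 + r" using j by simp
    show "dist (expected_greedy (thick_Z n) / real (max_matching_size (thick_Z n))) (1 / 2) < r"
      unfolding mm dist_real_def using lo hi by simp
  qed
qed


end
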